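(* Each of the following families of functions $\omega_k\colon \mathbb{N}_0\to\mathbb{N}$, indexed by $k\in\mathbb{N}$, is a convex growth family: (1) $\omega_k(n)=k^n$; (2) $\omega_k(n)=2^{kn}$; (3) $\omega_k(n)=k^n\cdot n!$; (4) $\omega_k(n)=k^{n^2}$; (5) $\omega_k(n)=k^n (n!)^k$.
   Context: $\mathbb{N}=\{1,2,3,\dots\}$, $\mathbb{N}_0=\mathbb{N}\cup\{0\}$. A family $(\omega_k)_{k\in\mathbb{N}}$ of functions $\omega_k\colon\mathbb{N}_0\to\mathbb{N}$ is a growth family if for all $k\in\mathbb{N}$ and $n,m\in\mathbb{N}_0$: (W1) $\omega_k(0)=1$ and $\omega_k(n)\le\omega_{k+1}(n)$; (W2) $\omega_k(n)\omega_k(m)\le\omega_k(n+m)$; (W3) for every $k_1\in\mathbb{N}$ there is $k_2\ge k_1$ with $\omega_{k_2}(n)\ge 2^n\omega_{k_1}(n)$ for all $n\in\mathbb{N}_0$. A growth family is convex if for every $k_1$ one can choose $k_2\ge k_1$ as in (W3) such that in addition for every $k_3\ge k_2$ there exists $\alpha\in\,]0,1[$ with $\omega_{k_1}(n)^\alpha\omega_{k_3}(n)^{1-\alpha}\le\omega_{k_2}(n)$ for all $n\in\mathbb{N}_0$. *)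

theory Defs
  imports Complex_Main
begin

text \<open>A family indexed by k in the positive naturals, each member a function
  from nat (including 0) to the positive naturals. Indices k = 0 are ignored.\<close>

definition growth_family :: "(nat \<Rightarrow> nat \<Rightarrow> nat) \<Rightarrow> bool" where
  "growth_family \<omega> \<longleftrightarrow>
     (\<forall>k\<ge>1. \<forall>n. 1 \<le> \<omega> k n) \<and>
     (\<forall>k\<ge>1. \<omega> k 0 = 1 \<and> (\<forall>n. \<omega> k n \<le> \<omega> (k + 1) n)) \<and>
     (\<forall>k\<ge>1. \<forall>n m. \<omega> k n * \<omega> k m \<le> \<omega> k (n + m)) \<and>
     (\<forall>k1\<ge>1. \<exists>k2\<ge>k1. \<forall>n. 2 ^ n * \<omega> k1 n \<le> \<omega> k2 n)"

definition convex_growth_family :: "(nat \<Rightarrow> nat \<Rightarrow> nat) \<Rightarrow> bool" where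
  "convex_growth_family \<omega> \<longleftrightarrow>
     growth_family \<omega> \<and>
     (\<forall>k1\<ge>1. \<exists>k2\<ge>k1. (\<forall>n. 2 ^ n * \<omega> k1 n \<le> \<omega> k2 n) \<and>
        (\<forall>k3\<ge>k2. \<exists>\<alpha>::real. 0 < \<alpha> \<and> \<alpha> < 1 \<and>
           (\<forall>n. real (\<omega> k1 n) powr \<alpha> * real (\<omega> k3 n) powr (1 - \<alpha>) \<le> real (\<omega> k2 n))))"

end

theory Submission
  imports Defs
begin

lemma lin_choice:
  fixes A B C :: real
  assumes "A < C"
  shows "\<exists>d. 0 < d \<and> d < 1 \<and> (\<forall>d'. 0 < d' \<and> d' \<le> d \<longrightarrow> A + d' * (B - A) \<le> C)"
proof (cases "B \<le> A")
  case True
  show ?thesis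
  proof (intro exI[of _ "1/2"] conjI allI impI)
    fix d' :: real assume "0 < d' \<and> d' \<le> 1/2"
    then have "d' * (B - A) \<le> 0" using True by (simp add: mult_nonneg_nonpos)
    then show "A + d' * (B - A) \<le> C" using assms by linarith
  qed auto
next
  case False
  define d where "d = min (1/2) ((C - A) / (B - A))"
  have pos: "0 < d" using False assms by (simp add: d_def)
  have le: "d * (B - A) \<le> C - A"
  proof -
    have "d \<le> (C - A) / (B - A)" by (simp add: d_def)
    then show ?thesis using False by (simp add: pos_le_divide_eq)
  qed
  show ?thesis
  proof (intro exI[of _ d] conjI allI impI)
    fix d' :: real assume h: "0 < d' \<and> d' \<le> d"
    then have "d' * (B - A) \<le> d * (B - A)" using False by (intro mult_right_mono) auto
    then show "A + d' * (B - A) \<le> C" using le by linarith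
  qed (use pos in \<open>auto simp: d_def\<close>)
qed

lemma powr_conv:
  fixes x y z a :: real
  assumes "x > 0" "y > 0" "z > 0" "a * ln x + (1 - a) * ln y \<le> ln z"
  shows "x powr a * y powr (1 - a) \<le> z"
proof -
  have "x powr a * y powr (1 - a) = exp (a * ln x + (1 - a) * ln y)"
    using assms by (simp add: powr_def exp_add)
  also have "\<dots> \<le> exp (ln z)" using assms(4) by simp
  also have "\<dots> = z" using assms(3) by simp
  finally show ?thesis .
qed

lemma ln_pow_nat: "0 < m \<Longrightarrow> ln (real (m ^ n)) = real n * ln (real m)"
  by (simp add: ln_realpow)

lemma fact_mult_le: "fact n * fact m \<le> (fact (n + m) :: nat)"
proof -
  have "fact n * fact m * ((n + m) choose n) = (fact (n + m) :: nat)"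
    using binomial_fact_lemma[of n "n + m"] by simp
  moreover have "(n + m) choose n \<ge> 1" using zero_less_binomial[of n "n+m"] by linarith
  ultimately show ?thesis
    by (metis mult_le_mono2 nat_mult_1_right)
qed

lemma fam1: "convex_growth_family (\<lambda>k n. k ^ n)"
  unfolding convex_growth_family_def growth_family_def
proof (intro conjI allI impI)
  fix k1 :: nat assume k1: "1 \<le> k1"
  show "\<exists>k2\<ge>k1. \<forall>n. 2 ^ n * k1 ^ n \<le> k2 ^ n"
    by (rule exI[of _ "2*k1"]) (auto simp: power_mult_distrib)
  show "\<exists>k2\<ge>k1. (\<forall>n. 2 ^ n * k1 ^ n \<le> k2 ^ n) \<and>
          (\<forall>k3\<ge>k2. \<exists>\<alpha>::real. 0 < \<alpha> \<and> \<alpha> < 1 \<and>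
             (\<forall>n. real (k1 ^ n) powr \<alpha> * real (k3 ^ n) powr (1 - \<alpha>) \<le> real (k2 ^ n)))"
  proof (intro exI[of _ "2*k1"] conjI allI impI)
    fix k3 :: nat assume k3: "2 * k1 \<le> k3"
    have "ln (real k1) < ln (real (2 * k1))" using k1 by simp
    from lin_choice[OF this, of "ln (real k3)"] obtain d where
      d: "0 < d" "d < 1" "ln (real k1) + d * (ln (real k3) - ln (real k1)) \<le> ln (real (2 * k1))"
      by auto
    show "\<exists>\<alpha>::real. 0 < \<alpha> \<and> \<alpha> < 1 \<and>
             (\<forall>n. real (k1 ^ n) powr \<alpha> * real (k3 ^ n) powr (1 - \<alpha>) \<le> real ((2*k1) ^ n))"
    proof (intro exI[of _ "1 - d"] conjI allI)
      fix n
      have "real n * (ln (real k1) + d * (ln (real k3) - ln (real k1))) \<le> real n * ln (real (2 * k1))"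
        using d(3) by (intro mult_left_mono) auto
      then have "(1 - d) * ln (real (k1 ^ n)) + (1 - (1 - d)) * ln (real (k3 ^ n)) \<le> ln (real ((2*k1) ^ n))"
        using k1 k3 by (simp only: ln_pow_nat) (auto simp: algebra_simps)
      then show "real (k1 ^ n) powr (1 - d) * real (k3 ^ n) powr (1 - (1 - d)) \<le> real ((2*k1) ^ n)"
        using k1 k3 by (intro powr_conv) auto
    qed (use d in auto)
  qed (auto simp: power_mult_distrib)
qed (auto intro: power_mono simp: power_add)

lemma ln_mult_nat: "0 < a \<Longrightarrow> 0 < b \<Longrightarrow> ln (real (a * b)) = ln (real a) + ln (real b)"
  by (simp add: ln_mult)

lemma fam2: "convex_growth_family (\<lambda>k n. 2 ^ (k * n))"
  unfolding convex_growth_family_def growth_family_def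
proof (intro conjI allI impI)
  fix k :: nat and n m :: nat assume "1 \<le> k"
  show "2 ^ (k * n) * 2 ^ (k * m) \<le> (2::nat) ^ (k * (n + m))"
    by (simp add: power_add[symmetric] distrib_left)
next
  fix k n :: nat
  show "(2::nat) ^ (k * n) \<le> 2 ^ ((k + 1) * n)" by (intro power_increasing) auto
next
  fix k1 :: nat assume k1: "1 \<le> k1"
  have w3: "\<forall>n. 2 ^ n * 2 ^ (k1 * n) \<le> (2::nat) ^ (2 * k1 * n)"
  proof
    fix n
    have "(2::nat) ^ n * 2 ^ (k1 * n) = 2 ^ (n + k1 * n)" by (simp add: power_add)
    also have "\<dots> \<le> 2 ^ (2 * k1 * n)" using k1 by (intro power_increasing) auto
    finally show "2 ^ n * 2 ^ (k1 * n) \<le> (2::nat) ^ (2 * k1 * n)" .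
  qed
  then show "\<exists>k2\<ge>k1. \<forall>n. 2 ^ n * 2 ^ (k1 * n) \<le> (2::nat) ^ (k2 * n)" by (intro exI[of _ "2*k1"]) auto
  show "\<exists>k2\<ge>k1. (\<forall>n. 2 ^ n * 2 ^ (k1 * n) \<le> (2::nat) ^ (k2 * n)) \<and>
          (\<forall>k3\<ge>k2. \<exists>\<alpha>::real. 0 < \<alpha> \<and> \<alpha> < 1 \<and>
             (\<forall>n. real (2 ^ (k1 * n)) powr \<alpha> * real (2 ^ (k3 * n)) powr (1 - \<alpha>) \<le> real (2 ^ (k2 * n))))"
  proof (intro exI[of _ "2*k1"] conjI allI impI)
    fix k3 :: nat assume k3: "2 * k1 \<le> k3"
    have "real k1 < real (2 * k1)" using k1 by simp
    from lin_choice[OF this, of "real k3"] obtain d where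
      d: "0 < d" "d < 1" "real k1 + d * (real k3 - real k1) \<le> real (2 * k1)"
      by auto
    show "\<exists>\<alpha>::real. 0 < \<alpha> \<and> \<alpha> < 1 \<and>
             (\<forall>n. real (2 ^ (k1 * n)) powr \<alpha> * real (2 ^ (k3 * n)) powr (1 - \<alpha>) \<le> real (2 ^ (2 * k1 * n)))"
    proof (intro exI[of _ "1 - d"] conjI allI)
      fix n
      have "(real n * ln 2) * (real k1 + d * (real k3 - real k1)) \<le> (real n * ln 2) * real (2 * k1)"
        using d(3) by (intro mult_left_mono) auto
      then have "(1 - d) * ln (real (2 ^ (k1 * n))) + (1 - (1 - d)) * ln (real (2 ^ (k3 * n))) \<le> ln (real (2 ^ (2 * k1 * n)))"
        by (simp only: ln_pow_nat zero_less_numeral) (auto simp: algebra_simps)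
      then show "real (2 ^ (k1 * n)) powr (1 - d) * real (2 ^ (k3 * n)) powr (1 - (1 - d)) \<le> real (2 ^ (2 * k1 * n))"
        by (intro powr_conv) auto
    qed (use d in auto)
  qed (use w3 in auto)
qed auto

lemma fam3: "convex_growth_family (\<lambda>k n. k ^ n * fact n)"
  unfolding convex_growth_family_def growth_family_def
proof (intro conjI allI impI)
  fix k :: nat and n m :: nat assume "1 \<le> k"
  have "k ^ n * fact n * (k ^ m * fact m) = k ^ (n + m) * (fact n * fact m)"
    by (simp add: power_add algebra_simps)
  also have "\<dots> \<le> k ^ (n + m) * fact (n + m)" by (intro mult_left_mono fact_mult_le) auto
  finally show "k ^ n * fact n * (k ^ m * fact m) \<le> k ^ (n + m) * fact (n + m)" .
next
  fix k n :: nat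
  show "k ^ n * fact n \<le> (k + 1) ^ n * fact n" by (intro mult_right_mono power_mono) auto
next
  fix k n :: nat assume "1 \<le> k"
  then show "1 \<le> k ^ n * fact n" by (metis fact_ge_1 mult_le_mono one_le_power nat_mult_1)
next
  fix k1 :: nat assume k1: "1 \<le> k1"
  have w3: "\<forall>n. 2 ^ n * (k1 ^ n * fact n) \<le> (2 * k1) ^ n * fact n"
    by (simp add: power_mult_distrib)
  then show "\<exists>k2\<ge>k1. \<forall>n. 2 ^ n * (k1 ^ n * fact n) \<le> k2 ^ n * fact n" by (intro exI[of _ "2*k1"]) auto
  show "\<exists>k2\<ge>k1. (\<forall>n. 2 ^ n * (k1 ^ n * fact n) \<le> k2 ^ n * fact n) \<and>
          (\<forall>k3\<ge>k2. \<exists>\<alpha>::real. 0 < \<alpha> \<and> \<alpha> < 1 \<and>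
             (\<forall>n. real (k1 ^ n * fact n) powr \<alpha> * real (k3 ^ n * fact n) powr (1 - \<alpha>) \<le> real (k2 ^ n * fact n)))"
  proof (intro exI[of _ "2*k1"] conjI allI impI)
    fix k3 :: nat assume k3: "2 * k1 \<le> k3"
    have "ln (real k1) < ln (real (2 * k1))" using k1 by simp
    from lin_choice[OF this, of "ln (real k3)"] obtain d where
      d: "0 < d" "d < 1" "ln (real k1) + d * (ln (real k3) - ln (real k1)) \<le> ln (real (2 * k1))"
      by auto
    show "\<exists>\<alpha>::real. 0 < \<alpha> \<and> \<alpha> < 1 \<and>
             (\<forall>n. real (k1 ^ n * fact n) powr \<alpha> * real (k3 ^ n * fact n) powr (1 - \<alpha>) \<le> real ((2*k1) ^ n * fact n))"
    proof (intro exI[of _ "1 - d"] conjI allI)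
      fix n
      have "real n * (ln (real k1) + d * (ln (real k3) - ln (real k1))) \<le> real n * ln (real (2 * k1))"
        using d(3) by (intro mult_left_mono) auto
      moreover have "0 < k1 ^ n" "0 < k3 ^ n" "0 < (2*k1) ^ n" "0 < (fact n :: nat)" using k1 k3 by auto
      ultimately have "(1 - d) * ln (real (k1 ^ n * fact n)) + (1 - (1 - d)) * ln (real (k3 ^ n * fact n)) \<le> ln (real ((2*k1) ^ n * fact n))"
        using k1 k3 by (simp only: ln_mult_nat ln_pow_nat) (auto simp: algebra_simps)
      then show "real (k1 ^ n * fact n) powr (1 - d) * real (k3 ^ n * fact n) powr (1 - (1 - d)) \<le> real ((2*k1) ^ n * fact n)"
        using k1 k3 by (intro powr_conv) auto
    qed (use d in auto)
  qed (use w3 in auto)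
qed auto

lemma fam4: "convex_growth_family (\<lambda>k n. k ^ (n ^ 2))"
  unfolding convex_growth_family_def growth_family_def
proof (intro conjI allI impI)
  fix k :: nat and n m :: nat assume k: "1 \<le> k"
  have "k ^ (n ^ 2) * k ^ (m ^ 2) = k ^ (n ^ 2 + m ^ 2)" by (simp add: power_add)
  also have "\<dots> \<le> k ^ ((n + m) ^ 2)" using k by (intro power_increasing) (auto simp: power2_sum)
  finally show "k ^ (n ^ 2) * k ^ (m ^ 2) \<le> k ^ ((n + m) ^ 2)" .
next
  fix k n :: nat
  show "k ^ (n ^ 2) \<le> (k + 1) ^ (n ^ 2)" by (intro power_mono) auto
next
  fix k n :: nat assume "1 \<le> k"
  then show "1 \<le> k ^ (n ^ 2)" by (simp add: one_le_power)
next
  fix k1 :: nat assume k1: "1 \<le> k1"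
  have w3: "\<forall>n. 2 ^ n * k1 ^ (n ^ 2) \<le> (2 * k1) ^ (n ^ 2)"
  proof
    fix n :: nat
    have "n \<le> n ^ 2" by (simp add: power2_eq_square)
    then have "(2::nat) ^ n \<le> 2 ^ (n ^ 2)" by (intro power_increasing) auto
    then show "2 ^ n * k1 ^ (n ^ 2) \<le> (2 * k1) ^ (n ^ 2)"
      by (simp add: power_mult_distrib)
  qed
  then show "\<exists>k2\<ge>k1. \<forall>n. 2 ^ n * k1 ^ (n ^ 2) \<le> k2 ^ (n ^ 2)" by (intro exI[of _ "2*k1"]) auto
  show "\<exists>k2\<ge>k1. (\<forall>n. 2 ^ n * k1 ^ (n ^ 2) \<le> k2 ^ (n ^ 2)) \<and>
          (\<forall>k3\<ge>k2. \<exists>\<alpha>::real. 0 < \<alpha> \<and> \<alpha> < 1 \<and>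
             (\<forall>n. real (k1 ^ (n ^ 2)) powr \<alpha> * real (k3 ^ (n ^ 2)) powr (1 - \<alpha>) \<le> real (k2 ^ (n ^ 2))))"
  proof (intro exI[of _ "2*k1"] conjI allI impI)
    fix k3 :: nat assume k3: "2 * k1 \<le> k3"
    have "ln (real k1) < ln (real (2 * k1))" using k1 by simp
    from lin_choice[OF this, of "ln (real k3)"] obtain d where
      d: "0 < d" "d < 1" "ln (real k1) + d * (ln (real k3) - ln (real k1)) \<le> ln (real (2 * k1))"
      by auto
    show "\<exists>\<alpha>::real. 0 < \<alpha> \<and> \<alpha> < 1 \<and>
             (\<forall>n. real (k1 ^ (n ^ 2)) powr \<alpha> * real (k3 ^ (n ^ 2)) powr (1 - \<alpha>) \<le> real ((2*k1) ^ (n ^ 2)))"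
    proof (intro exI[of _ "1 - d"] conjI allI)
      fix n :: nat
      have "real (n ^ 2) * (ln (real k1) + d * (ln (real k3) - ln (real k1))) \<le> real (n ^ 2) * ln (real (2 * k1))"
        using d(3) by (intro mult_left_mono) auto
      moreover have "0 < k1" "0 < k3" "0 < 2*k1" using k1 k3 by auto
      ultimately have "(1 - d) * ln (real (k1 ^ (n ^ 2))) + (1 - (1 - d)) * ln (real (k3 ^ (n ^ 2))) \<le> ln (real ((2*k1) ^ (n ^ 2)))"
        by (simp only: ln_pow_nat) (auto simp: algebra_simps)
      then show "real (k1 ^ (n ^ 2)) powr (1 - d) * real (k3 ^ (n ^ 2)) powr (1 - (1 - d)) \<le> real ((2*k1) ^ (n ^ 2))"
        using k1 k3 by (intro powr_conv) auto
    qed (use d in auto)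
  qed (use w3 in auto)
qed auto


lemma fam5: "convex_growth_family (\<lambda>k n. k ^ n * (fact n) ^ k)"
  unfolding convex_growth_family_def growth_family_def
proof (intro conjI allI impI)
  fix k :: nat and n m :: nat assume k: "1 \<le> k"
  have "k ^ n * fact n ^ k * (k ^ m * fact m ^ k) = k ^ (n + m) * (fact n * fact m) ^ k"
    by (simp add: power_add power_mult_distrib algebra_simps)
  also have "\<dots> \<le> k ^ (n + m) * fact (n + m) ^ k"
    by (intro mult_left_mono power_mono fact_mult_le) auto
  finally show "k ^ n * fact n ^ k * (k ^ m * fact m ^ k) \<le> k ^ (n + m) * fact (n + m) ^ k" .
next
  fix k n :: nat
  have "(fact n :: nat) ^ k \<le> fact n ^ (k + 1)" by (intro power_increasing) auto
  then show "k ^ n * fact n ^ k \<le> (k + 1) ^ n * fact n ^ (k + 1)"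
    by (intro mult_mono power_mono) auto
next
  fix k n :: nat assume "1 \<le> k"
  then show "1 \<le> k ^ n * (fact n :: nat) ^ k"
    by (metis fact_ge_1 mult_le_mono one_le_power nat_mult_1)
next
  fix k1 :: nat assume k1: "1 \<le> k1"
  have w3: "\<forall>n. 2 ^ n * (k1 ^ n * (fact n :: nat) ^ k1) \<le> (2 * k1) ^ n * fact n ^ (2 * k1)"
  proof
    fix n
    have "(fact n :: nat) ^ k1 \<le> fact n ^ (2 * k1)" by (intro power_increasing) auto
    then show "2 ^ n * (k1 ^ n * (fact n :: nat) ^ k1) \<le> (2 * k1) ^ n * fact n ^ (2 * k1)"
      by (simp add: power_mult_distrib)
  qed
  then show "\<exists>k2\<ge>k1. \<forall>n. 2 ^ n * (k1 ^ n * (fact n :: nat) ^ k1) \<le> k2 ^ n * fact n ^ k2"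
    by (intro exI[of _ "2*k1"]) auto
  show "\<exists>k2\<ge>k1. (\<forall>n. 2 ^ n * (k1 ^ n * (fact n :: nat) ^ k1) \<le> k2 ^ n * fact n ^ k2) \<and>
          (\<forall>k3\<ge>k2. \<exists>\<alpha>::real. 0 < \<alpha> \<and> \<alpha> < 1 \<and>
             (\<forall>n. real (k1 ^ n * fact n ^ k1) powr \<alpha> * real (k3 ^ n * fact n ^ k3) powr (1 - \<alpha>) \<le> real (k2 ^ n * fact n ^ k2)))"
  proof (intro exI[of _ "2*k1"] conjI allI impI)
    fix k3 :: nat assume k3: "2 * k1 \<le> k3"
    have "ln (real k1) < ln (real (2 * k1))" using k1 by simp
    from lin_choice[OF this, of "ln (real k3)"] obtain d1 where
      d1: "0 < d1" "d1 < 1" "\<forall>d'. 0 < d' \<and> d' \<le> d1 \<longrightarrow> ln (real k1) + d' * (ln (real k3) - ln (real k1)) \<le> ln (real (2 * k1))"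
      by auto
    have "real k1 < real (2 * k1)" using k1 by simp
    from lin_choice[OF this, of "real k3"] obtain d2 where
      d2: "0 < d2" "d2 < 1" "\<forall>d'. 0 < d' \<and> d' \<le> d2 \<longrightarrow> real k1 + d' * (real k3 - real k1) \<le> real (2 * k1)"
      by auto
    define d where "d = min d1 d2"
    have d: "0 < d" "d < 1" using d1 d2 by (auto simp: d_def)
    have e1: "ln (real k1) + d * (ln (real k3) - ln (real k1)) \<le> ln (real (2 * k1))"
      using d1(3) d by (auto simp: d_def)
    have e2: "real k1 + d * (real k3 - real k1) \<le> real (2 * k1)"
      using d2(3) d by (auto simp: d_def)
    show "\<exists>\<alpha>::real. 0 < \<alpha> \<and> \<alpha> < 1 \<and>
             (\<forall>n. real (k1 ^ n * fact n ^ k1) powr \<alpha> * real (k3 ^ n * fact n ^ k3) powr (1 - \<alpha>) \<le> real ((2*k1) ^ n * fact n ^ (2*k1)))"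
    proof (intro exI[of _ "1 - d"] conjI allI)
      fix n
      have "real n * (ln (real k1) + d * (ln (real k3) - ln (real k1))) \<le> real n * ln (real (2 * k1))"
        using e1 by (intro mult_left_mono) auto
      moreover have "ln (real (fact n)) * (real k1 + d * (real k3 - real k1)) \<le> ln (real (fact n)) * real (2 * k1)"
        using e2 by (intro mult_left_mono) auto
      moreover have "0 < k1" "0 < k3" "0 < 2*k1" "0 < (fact n :: nat)" using k1 k3 by auto
      moreover have "0 < k1 ^ n" "0 < k3 ^ n" "0 < (2*k1) ^ n" "0 < (fact n :: nat) ^ k1"
        "0 < (fact n :: nat) ^ k3" "0 < (fact n :: nat) ^ (2*k1)" using k1 k3 by auto
      ultimately have "(1 - d) * ln (real (k1 ^ n * fact n ^ k1)) + (1 - (1 - d)) * ln (real (k3 ^ n * fact n ^ k3)) \<le> ln (real ((2*k1) ^ n * fact n ^ (2*k1)))"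
        by (simp only: ln_mult_nat ln_pow_nat) (auto simp: algebra_simps)
      then show "real (k1 ^ n * fact n ^ k1) powr (1 - d) * real (k3 ^ n * fact n ^ k3) powr (1 - (1 - d)) \<le> real ((2*k1) ^ n * fact n ^ (2*k1))"
        using k1 k3 by (intro powr_conv) auto
    qed (use d in auto)
  qed (use w3 in auto)
qed auto

theorem proposition1p4:
  shows "convex_growth_family (\<lambda>k n. k ^ n) \<and>
         convex_growth_family (\<lambda>k n. 2 ^ (k * n)) \<and>
         convex_growth_family (\<lambda>k n. k ^ n * fact n) \<and>
         convex_growth_family (\<lambda>k n. k ^ (n ^ 2)) \<and>
         convex_growth_family (\<lambda>k n. k ^ n * (fact n) ^ k)"
  using fam1 fam2 fam3 fam4 fam5 by blast

end
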